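(* If $N\le4$, then $\mathcal{SE}_2=\mathcal{SS}$: every superenergy tensor $T_{ab}\{\Omega_{[p]}\}$ of an arbitrary $p$-form $\Omega$ ($1\le p\le N$) equals the superenergy tensor of some simple form.
   Context: Lorentzian metric $g_{ab}$ of signature $(+,-,\dots,-)$ in dimension $N$ with a time orientation. Superenergy tensor of a $p$-form ($1\le p\le N$): $T_{ab}\{\Omega_{[p]}\}=\frac{(-1)^{p-1}}{(p-1)!}[\Omega_{a a_2\dots a_p}\Omega_b{}^{a_2\dots a_p}-\frac{1}{2p}(\Omega\cdot\Omega)g_{ab}]$, $\Omega\cdot\Omega$ full contraction (for an $N$-form $f\eta$ it is $\tfrac12f^2g_{ab}$). $\mathcal{SE}_2$ is the set of all such tensors for arbitrary $p$-forms; $\mathcal{SS}\subset\mathcal{SE}_2$ is the subset arising from simple $p$-forms (wedge products of $p$ linearly independent 1-forms). *)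

theory Defs
  imports Complex_Main "HOL-Combinatorics.Permutations"
begin

text \<open>Components are taken with respect to a fixed coordinate basis of an
N-dimensional real vector space; indices range over 0..N-1.
A covariant p-tensor is a function from index lists of length p to reals.\<close>

definition idx :: "nat \<Rightarrow> nat \<Rightarrow> nat list set" where
  "idx N p = {xs. length xs = p \<and> set xs \<subseteq> {..<N}}"

definition eta :: "nat \<Rightarrow> nat \<Rightarrow> real" where
  "eta i j = (if i \<noteq> j then 0 else if i = 0 then 1 else -1)"

text \<open>g (lower components g_ab) is a Lorentzian metric of signature (+,-,...,-):
symmetric and admitting a basis e_0..e_{N-1} (e a i = a-th component of e_i)
which is orthonormal with g(e_i,e_j) = eta_ij.\<close>
definition lorentzian :: "nat \<Rightarrow> (nat \<Rightarrow> nat \<Rightarrow> real) \<Rightarrow> bool" where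
  "lorentzian N g \<longleftrightarrow> (\<forall>a<N. \<forall>b<N. g a b = g b a) \<and>
     (\<exists>e :: nat \<Rightarrow> nat \<Rightarrow> real. \<forall>i<N. \<forall>j<N.
        (\<Sum>a<N. \<Sum>b<N. g a b * e a i * e b j) = eta i j)"

definition inverse_metric :: "nat \<Rightarrow> (nat \<Rightarrow> nat \<Rightarrow> real) \<Rightarrow> (nat \<Rightarrow> nat \<Rightarrow> real) \<Rightarrow> bool" where
  "inverse_metric N g gi \<longleftrightarrow>
     (\<forall>a<N. \<forall>c<N. (\<Sum>b<N. g a b * gi b c) = (if a = c then 1 else 0))"

definition is_form :: "nat \<Rightarrow> nat \<Rightarrow> (nat list \<Rightarrow> real) \<Rightarrow> bool" where
  "is_form N p \<Omega> \<longleftrightarrow> (\<forall>xs \<in> idx N p. \<forall>i<p. \<forall>j<p. i \<noteq> j \<longrightarrow>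
      \<Omega> (xs[i := xs ! j, j := xs ! i]) = - \<Omega> xs)"

definition contr :: "(nat \<Rightarrow> nat \<Rightarrow> real) \<Rightarrow> nat list \<Rightarrow> nat list \<Rightarrow> real" where
  "contr gi xs ys = (\<Prod>k<length xs. gi (xs ! k) (ys ! k))"

definition fdot :: "nat \<Rightarrow> (nat \<Rightarrow> nat \<Rightarrow> real) \<Rightarrow> nat \<Rightarrow> (nat list \<Rightarrow> real) \<Rightarrow> real" where
  "fdot N gi p \<Omega> = (\<Sum>xs\<in>idx N p. \<Sum>ys\<in>idx N p. \<Omega> xs * \<Omega> ys * contr gi xs ys)"

definition superenergy ::
  "nat \<Rightarrow> (nat \<Rightarrow> nat \<Rightarrow> real) \<Rightarrow> (nat \<Rightarrow> nat \<Rightarrow> real) \<Rightarrow> nat \<Rightarrow> (nat list \<Rightarrow> real)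
     \<Rightarrow> nat \<Rightarrow> nat \<Rightarrow> real" where
  "superenergy N g gi p \<Omega> a b =
     (-1) ^ (p - 1) / fact (p - 1) *
     ((\<Sum>xs\<in>idx N (p - 1). \<Sum>ys\<in>idx N (p - 1). \<Omega> (a # xs) * \<Omega> (b # ys) * contr gi xs ys)
      - 1 / (2 * real p) * fdot N gi p \<Omega> * g a b)"

text \<open>Wedge product theta_0 ^ ... ^ theta_{p-1} of 1-forms (theta i a = a-th component of theta_i).\<close>
definition wedge :: "nat \<Rightarrow> (nat \<Rightarrow> nat \<Rightarrow> real) \<Rightarrow> nat list \<Rightarrow> real" where
  "wedge p \<theta> xs = (\<Sum>\<sigma> \<in> {\<sigma>. \<sigma> permutes {..<p}}. of_int (sign \<sigma>) * (\<Prod>i<p. \<theta> (\<sigma> i) (xs ! i)))"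

definition lin_indep_forms :: "nat \<Rightarrow> nat \<Rightarrow> (nat \<Rightarrow> nat \<Rightarrow> real) \<Rightarrow> bool" where
  "lin_indep_forms N p \<theta> \<longleftrightarrow>
     (\<forall>c :: nat \<Rightarrow> real. (\<forall>a<N. (\<Sum>i<p. c i * \<theta> i a) = 0) \<longrightarrow> (\<forall>i<p. c i = 0))"

end

theory Submission
  imports Defs "Jordan_Normal_Form.Determinant"
begin


lemma finite_idx: "finite (idx N p)"
  unfolding idx_def using finite_lists_length_eq[of "{..<N}" p] by (simp add: conj_commute)

lemma idx_0: "idx N 0 = {[]}" unfolding idx_def by auto

lemma idx_Suc: "idx N (Suc p) = (\<lambda>(x,xs). x # xs) ` ({..<N} \<times> idx N p)"
  unfolding idx_def by (force simp: length_Suc_conv image_def)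

lemma sum_idx_Suc: "(\<Sum>xs\<in>idx N (Suc p). h xs) = (\<Sum>x<N. \<Sum>xs\<in>idx N p. h (x # xs))"
proof -
  have inj: "inj_on (\<lambda>(x,xs). x # xs) ({..<N} \<times> idx N p)" by (auto simp: inj_on_def)
  show ?thesis unfolding idx_Suc sum.reindex[OF inj]
    by (simp add: sum.cartesian_product split_def)
qed

lemma Cons_idx: "x < N \<Longrightarrow> xs \<in> idx N p \<Longrightarrow> x # xs \<in> idx N (Suc p)"
  unfolding idx_def by auto

lemma se_cong:
  assumes "\<forall>xs\<in>idx N p. \<Omega> xs = \<Phi> xs" "1 \<le> p" "a < N" "b < N"
  shows "superenergy N g gi p \<Omega> a b = superenergy N g gi p \<Phi> a b"
proof -
  obtain r where p: "p = Suc r" using assms(2) by (cases p) auto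
  have "fdot N gi p \<Omega> = fdot N gi p \<Phi>" unfolding fdot_def using assms(1)
    by (intro sum.cong refl) auto
  moreover have "(\<Sum>xs\<in>idx N (p - 1). \<Sum>ys\<in>idx N (p - 1). \<Omega> (a # xs) * \<Omega> (b # ys) * contr gi xs ys)
     = (\<Sum>xs\<in>idx N (p - 1). \<Sum>ys\<in>idx N (p - 1). \<Phi> (a # xs) * \<Phi> (b # ys) * contr gi xs ys)"
    using assms(1,3,4) Cons_idx unfolding p by (intro sum.cong refl) auto
  ultimately show ?thesis unfolding superenergy_def by simp
qed

definition WM :: "nat \<Rightarrow> (nat \<Rightarrow> nat \<Rightarrow> real) \<Rightarrow> nat list \<Rightarrow> real mat" where
  "WM q \<theta> xs = mat q q (\<lambda>(i,j). \<theta> j (xs ! i))"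

lemma WM_carrier[simp]: "WM q \<theta> xs \<in> carrier_mat q q" unfolding WM_def by simp

lemma wedge_det: "wedge q \<theta> xs = det (WM q \<theta> xs)"
proof -
  have "det (WM q \<theta> xs) = (\<Sum>\<sigma> | \<sigma> permutes {0..<q}. signof \<sigma> * (\<Prod>i=0..<q. WM q \<theta> xs $$ (i, \<sigma> i)))"
    by (rule det_def'[OF WM_carrier])
  also have "\<dots> = wedge q \<theta> xs" unfolding wedge_def lessThan_atLeast0
  proof (intro sum.cong refl arg_cong2[where f="(*)"] prod.cong)
    fix \<sigma> i assume "\<sigma> \<in> {\<sigma>. \<sigma> permutes {0..<q}}" "i \<in> {0..<q}"
    then show "WM q \<theta> xs $$ (i, \<sigma> i) = \<theta> (\<sigma> i) (xs ! i)"
      unfolding WM_def by (auto simp: permutes_in_image)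
  qed
  finally show ?thesis by simp
qed

lemma wedge_0[simp]: "wedge 0 \<theta> xs = 1"
  unfolding wedge_det by (simp add: WM_def)

lemma wedge_Suc: "wedge (Suc q) \<theta> (x # xs) =
   (\<Sum>j<Suc q. (-1)^j * \<theta> j x * wedge q (\<lambda>i. \<theta> (if i < j then i else Suc i)) xs)"
proof -
  have "wedge (Suc q) \<theta> (x # xs) = (\<Sum>j<Suc q. WM (Suc q) \<theta> (x#xs) $$ (0,j) * cofactor (WM (Suc q) \<theta> (x#xs)) 0 j)"
    unfolding wedge_det by (rule laplace_expansion_row) auto
  also have "\<dots> = (\<Sum>j<Suc q. (-1)^j * \<theta> j x * wedge q (\<lambda>i. \<theta> (if i < j then i else Suc i)) xs)"
  proof (intro sum.cong refl)
    fix j assume j: "j \<in> {..<Suc q}"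
    have "mat_delete (WM (Suc q) \<theta> (x#xs)) 0 j = WM q (\<lambda>i. \<theta> (if i < j then i else Suc i)) xs"
      unfolding mat_delete_def WM_def by (rule eq_matI) auto
    then show "WM (Suc q) \<theta> (x#xs) $$ (0,j) * cofactor (WM (Suc q) \<theta> (x#xs)) 0 j =
       (-1)^j * \<theta> j x * wedge q (\<lambda>i. \<theta> (if i < j then i else Suc i)) xs"
      using j unfolding cofactor_def wedge_det by (simp add: WM_def)
  qed
  finally show ?thesis .
qed

lemma wedge1': "wedge (Suc 0) \<theta> [x] = \<theta> 0 x"
  using wedge_Suc[of 0 \<theta> x "[]"] by simp

lemma wedge1: "wedge 1 \<theta> [x] = \<theta> 0 x"
  using wedge1' by simp

lemma wedge2: "wedge 2 \<theta> [x, y] = \<theta> 0 x * \<theta> 1 y - \<theta> 1 x * \<theta> 0 y"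
  using wedge_Suc[of 1 \<theta> x "[y]"] by (simp add: wedge1' numeral_2_eq_2)


lemma wedge_form: "is_form N q (wedge q \<theta>)"
  unfolding is_form_def
proof (intro ballI allI impI)
  fix xs i j assume xs: "xs \<in> idx N q" and i: "i < q" and j: "j < q" and ij: "i \<noteq> j"
  have len: "length xs = q" using xs unfolding idx_def by auto
  have "WM q \<theta> (xs[i := xs ! j, j := xs ! i]) = swaprows i j (WM q \<theta> xs)"
    using i j by (intro eq_matI) (auto simp: WM_def nth_list_update len)
  then show "wedge q \<theta> (xs[i := xs ! j, j := xs ! i]) = - wedge q \<theta> xs"
    unfolding wedge_det using det_swaprows[OF i j ij WM_carrier] by simp
qed

lemma li_from_wedge:
  assumes xs: "xs \<in> idx N q" and nz: "wedge q \<theta> xs \<noteq> 0"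
  shows "lin_indep_forms N q \<theta>"
  unfolding lin_indep_forms_def
proof (intro allI impI)
  fix c :: "nat \<Rightarrow> real" and i
  assume h: "\<forall>a<N. (\<Sum>i<q. c i * \<theta> i a) = 0" and i: "i < q"
  show "c i = 0"
  proof (rule ccontr)
    assume ci: "c i \<noteq> 0"
    let ?v = "vec q c"
    have v0: "?v \<noteq> 0\<^sub>v q" using ci i by (metis index_vec index_zero_vec(1))
    have "WM q \<theta> xs *\<^sub>v ?v = 0\<^sub>v q"
    proof (rule eq_vecI)
      fix r assume "r < dim_vec (0\<^sub>v q :: real vec)"
      then have r: "r < q" by simp
      have xr: "xs ! r < N" using xs r unfolding idx_def by (auto simp: subset_iff)
      have "(WM q \<theta> xs *\<^sub>v ?v) $ r = (\<Sum>k\<in>{0..<q}. \<theta> k (xs ! r) * c k)"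
        using r by (simp add: scalar_prod_def WM_def)
      also have "\<dots> = (\<Sum>k<q. c k * \<theta> k (xs ! r))" by (simp add: lessThan_atLeast0 mult.commute)
      also have "\<dots> = 0" using h xr by simp
      finally show "(WM q \<theta> xs *\<^sub>v ?v) $ r = 0\<^sub>v q $ r" using r by simp
    qed (simp add: WM_def)
    then have "det (WM q \<theta> xs) = 0"
      using det_0_iff_vec_prod_zero[OF WM_carrier] v0 by (metis vec_carrier)
    then show False using nz unfolding wedge_det by simp
  qed
qed

definition mu :: "nat list \<Rightarrow> nat" where
  "mu xs = (\<Sum>k<length xs. k * xs ! k)"

lemma sum_two_remove:
  assumes "Suc i < p"
  shows "(\<Sum>k<p. h k) = h i + h (Suc i) + (\<Sum>k\<in>{..<p} - {i, Suc i}. (h k :: nat))"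
proof -
  have "(\<Sum>k<p. h k) = h i + (\<Sum>k\<in>{..<p} - {i}. h k)"
    using assms by (intro sum.remove) auto
  also have "(\<Sum>k\<in>{..<p} - {i}. h k) = h (Suc i) + (\<Sum>k\<in>{..<p} - {i} - {Suc i}. h k)"
    using assms by (intro sum.remove) auto
  also have "{..<p} - {i} - {Suc i} = {..<p} - {i, Suc i}" by auto
  finally show ?thesis by simp
qed

lemma mu_swap:
  assumes i: "Suc i < length xs" and lt: "xs ! Suc i < xs ! i"
  shows "mu xs < mu (xs[i := xs ! Suc i, Suc i := xs ! i])"
proof -
  let ?ys = "xs[i := xs ! Suc i, Suc i := xs ! i]"
  let ?p = "length xs"
  have eq: "(\<Sum>k\<in>{..<?p} - {i, Suc i}. k * ?ys ! k) = (\<Sum>k\<in>{..<?p} - {i, Suc i}. k * xs ! k)"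
    by (intro sum.cong refl) (auto simp: nth_list_update)
  have "mu xs = i * xs ! i + Suc i * xs ! Suc i + (\<Sum>k\<in>{..<?p} - {i, Suc i}. k * xs ! k)"
    unfolding mu_def using sum_two_remove[OF i] by simp
  moreover have "mu ?ys = i * xs ! Suc i + Suc i * xs ! i + (\<Sum>k\<in>{..<?p} - {i, Suc i}. k * xs ! k)"
    unfolding mu_def using sum_two_remove[OF i, of "\<lambda>k. k * ?ys ! k"] i eq by (simp add: nth_list_update)
  moreover have "i * xs ! i + Suc i * xs ! Suc i < i * xs ! Suc i + Suc i * xs ! i"
  proof -
    have "i * xs ! i + Suc i * xs ! Suc i = i * (xs ! i + xs ! Suc i) + xs ! Suc i" by (simp add: algebra_simps)
    moreover have "i * xs ! Suc i + Suc i * xs ! i = i * (xs ! i + xs ! Suc i) + xs ! i" by (simp add: algebra_simps)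
    ultimately show ?thesis using lt by simp
  qed
  ultimately show ?thesis by simp
qed

lemma mu_bound:
  assumes "xs \<in> idx N p" shows "mu xs \<le> p * (p * N)"
proof -
  have len: "length xs = p" and s: "set xs \<subseteq> {..<N}" using assms unfolding idx_def by auto
  have "mu xs \<le> (\<Sum>k<p. p * N)" unfolding mu_def len
  proof (rule sum_mono)
    fix k assume k: "k \<in> {..<p}"
    then have "xs ! k < N" using s len by (auto simp: subset_iff)
    then show "k * xs ! k \<le> p * N" using k by (intro mult_le_mono) auto
  qed
  then show ?thesis by simp
qed

lemma not_sorted_adj:
  assumes "\<not> sorted_wrt (<) (xs :: nat list)"
  shows "\<exists>i. Suc i < length xs \<and> xs ! Suc i \<le> xs ! i"
proof -
  have "transp ((<) :: nat \<Rightarrow> nat \<Rightarrow> bool)" by (auto simp: transp_def)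
  then show ?thesis using assms sorted_wrt_iff_nth_Suc_transp[of "(<)" xs] by (auto simp: not_less)
qed

lemma form_zero_sorted:
  assumes D: "is_form N p D" and z: "\<forall>xs\<in>idx N p. sorted_wrt (<) xs \<longrightarrow> D xs = 0"
  shows "\<forall>xs\<in>idx N p. D xs = 0"
proof -
  let ?B = "p * (p * N)"
  have "\<forall>xs. xs \<in> idx N p \<longrightarrow> ?B - mu xs = m \<longrightarrow> D xs = 0" for m
  proof (induction m rule: less_induct)
    case (less m)
    show ?case
    proof (intro allI impI)
      fix xs assume xs: "xs \<in> idx N p" and m: "?B - mu xs = m"
      have len: "length xs = p" using xs unfolding idx_def by auto
      show "D xs = 0"
      proof (cases "sorted_wrt (<) xs")
        case True then show ?thesis using z xs by auto
      next
        case False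
        then obtain i where i: "Suc i < length xs" and le: "xs ! Suc i \<le> xs ! i"
          using not_sorted_adj by blast
        let ?ys = "xs[i := xs ! Suc i, Suc i := xs ! i]"
        have sw: "D ?ys = - D xs" using D xs i len unfolding is_form_def by auto
        show ?thesis
        proof (cases "xs ! Suc i = xs ! i")
          case True
          then have "?ys = xs" by (metis list_update_id)
          then show ?thesis using sw by simp
        next
          case False
          then have lt: "xs ! Suc i < xs ! i" using le by simp
          have ys: "?ys \<in> idx N p" using xs i unfolding idx_def
            by (auto dest: set_update_subset_insert[THEN subsetD] simp: len)
          have "mu xs < mu ?ys" by (rule mu_swap[OF i lt])
          moreover have "mu ?ys \<le> ?B" by (rule mu_bound[OF ys])
          ultimately have "?B - mu ?ys < m" using m by simp
          then have "D ?ys = 0" using less.IH ys by blast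
          then show ?thesis using sw by simp
        qed
      qed
    qed
  qed
  then show ?thesis by blast
qed

lemma form_diff: "is_form N p A \<Longrightarrow> is_form N p B \<Longrightarrow> is_form N p (\<lambda>xs. A xs - B xs)"
  unfolding is_form_def by auto

lemma forms_eq_sorted:
  assumes "is_form N p A" "is_form N p B" "\<forall>xs\<in>idx N p. sorted_wrt (<) xs \<longrightarrow> A xs = B xs"
  shows "\<forall>xs\<in>idx N p. A xs = B xs"
  using form_zero_sorted[OF form_diff[OF assms(1,2)]] assms(3) by auto


lemma idx_SucE:
  assumes "xs \<in> idx N (Suc p)"
  obtains x ys where "xs = x # ys" "x < N" "ys \<in> idx N p"
  using assms unfolding idx_Suc by auto

lemma idx1E: assumes "xs \<in> idx N 1" obtains x where "xs = [x]" "x < N"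
  using assms unfolding One_nat_def by (elim idx_SucE) (auto simp: idx_0)

lemma idx2E: assumes "xs \<in> idx N 2" obtains x y where "xs = [x, y]" "x < N" "y < N"
  using assms unfolding numeral_2_eq_2 by (elim idx_SucE) (auto simp: idx_0)

lemma idx3E: assumes "xs \<in> idx N 3" obtains x y z where "xs = [x, y, z]" "x < N" "y < N" "z < N"
  using assms unfolding numeral_3_eq_3 by (elim idx_SucE) (auto simp: idx_0)

lemma idx4E: assumes "xs \<in> idx N 4" obtains x y z w where "xs = [x, y, z, w]" "x < N" "y < N" "z < N" "w < N"
proof -
  have "(4::nat) = Suc (Suc (Suc (Suc 0)))" by simp
  then show ?thesis using assms that by (metis idx_SucE idx_0 singletonD)
qed

lemma in_idx: "set xs \<subseteq> {..<N} \<Longrightarrow> xs \<in> idx N (length xs)"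
  unfolding idx_def by auto

lemma finish:
  assumes "1 \<le> p" "p \<le> N" "\<forall>xs\<in>idx N p. wedge p \<theta> xs = \<Omega> xs" "xs0 \<in> idx N p" "\<Omega> xs0 \<noteq> 0"
  shows "\<exists>q \<theta>. 1 \<le> q \<and> q \<le> N \<and> lin_indep_forms N q \<theta> \<and>
           (\<forall>a<N. \<forall>b<N. superenergy N g gi p \<Omega> a b = superenergy N g gi q (wedge q \<theta>) a b)"
proof (intro exI conjI allI impI)
  show "lin_indep_forms N p \<theta>" using li_from_wedge[OF assms(4)] assms(3-5) by auto
  fix a b assume "a < N" "b < N"
  then show "superenergy N g gi p \<Omega> a b = superenergy N g gi p (wedge p \<theta>) a b"
    using se_cong[of N p \<Omega> "wedge p \<theta>"] assms by auto
qed (use assms in auto)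

lemma case_p1:
  assumes "1 \<le> N" "xs0 \<in> idx N 1" "\<Omega> xs0 \<noteq> 0"
  shows "\<exists>q \<theta>. 1 \<le> q \<and> q \<le> N \<and> lin_indep_forms N q \<theta> \<and>
           (\<forall>a<N. \<forall>b<N. superenergy N g gi 1 \<Omega> a b = superenergy N g gi q (wedge q \<theta>) a b)"
proof -
  have "\<forall>xs\<in>idx N 1. wedge 1 (\<lambda>i a. \<Omega> [a]) xs = \<Omega> xs"
  proof
    fix xs assume "xs \<in> idx N 1"
    then obtain x where "xs = [x]" by (elim idx1E)
    then show "wedge 1 (\<lambda>i a. \<Omega> [a]) xs = \<Omega> xs" by (simp only: wedge1)
  qed
  then show ?thesis using finish[of 1 N "\<lambda>i a. \<Omega> [a]" \<Omega> xs0] assms by auto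
qed

lemma form2_swap: "is_form N 2 \<Omega> \<Longrightarrow> x < N \<Longrightarrow> y < N \<Longrightarrow> \<Omega> [y, x] = - \<Omega> [x, y]"
proof -
  assume f: "is_form N 2 \<Omega>" and x: "x < N" and y: "y < N"
  have "[x, y] \<in> idx N 2" using x y unfolding idx_def by auto
  from f[unfolded is_form_def, rule_format, OF this, of 0 1] show ?thesis by simp
qed

lemma form2_diag: "is_form N 2 \<Omega> \<Longrightarrow> x < N \<Longrightarrow> \<Omega> [x, x] = 0"
  using form2_swap[of N \<Omega> x x] by simp

lemma two_form_simple:
  assumes f: "is_form N 2 \<Omega>" and k: "k < N" and l: "l < N" and kl: "\<Omega> [k, l] \<noteq> 0"
    and pl: "\<forall>x<N. \<forall>y<N. \<Omega> [x, y] * \<Omega> [k, l] = \<Omega> [k, x] * \<Omega> [l, y] - \<Omega> [k, y] * \<Omega> [l, x]"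
  shows "\<forall>xs\<in>idx N 2. wedge 2 (\<lambda>i a. if i = 0 then \<Omega> [k, a] / \<Omega> [k, l] else \<Omega> [l, a]) xs = \<Omega> xs"
proof
  fix xs assume "xs \<in> idx N 2"
  then obtain x y where xs: "xs = [x, y]" "x < N" "y < N" by (elim idx2E)
  then show "wedge 2 (\<lambda>i a. if i = 0 then \<Omega> [k, a] / \<Omega> [k, l] else \<Omega> [l, a]) xs = \<Omega> xs"
    using pl[rule_format, OF xs(2,3)] kl by (simp add: wedge2 field_simps)
qed

lemma pl_small:
  assumes f: "is_form N 2 \<Omega>" and N: "N \<le> 3" and x: "x < N" and y: "y < N" and k: "k < N" and l: "l < N"
  shows "\<Omega> [x, y] * \<Omega> [k, l] = \<Omega> [k, x] * \<Omega> [l, y] - \<Omega> [k, y] * \<Omega> [l, x]"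
proof -
  have "x = y \<or> x = k \<or> x = l \<or> y = k \<or> y = l \<or> k = l" using N x y k l by arith
  then show ?thesis
  proof (elim disjE)
    assume "x = y" then show ?thesis using form2_diag[OF f] x by simp
  next
    assume "x = k" then show ?thesis using form2_diag[OF f] form2_swap[OF f l k] x by simp
  next
    assume "x = l" then show ?thesis using form2_diag[OF f] form2_swap[OF f l k] x by simp
  next
    assume "y = k" then show ?thesis using form2_diag[OF f] form2_swap[OF f l k] form2_swap[OF f x k] y by simp
  next
    assume "y = l" then show ?thesis using form2_diag[OF f] form2_swap[OF f l k] form2_swap[OF f x l] y by simp
  next
    assume "k = l" then show ?thesis using form2_diag[OF f] k by simp
  qed
qed


lemma case_p2_small:
  assumes f: "is_form N 2 \<Omega>" and N: "N \<le> 3" "2 \<le> N" and xs0: "xs0 \<in> idx N 2" "\<Omega> xs0 \<noteq> 0"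
  shows "\<exists>q \<theta>. 1 \<le> q \<and> q \<le> N \<and> lin_indep_forms N q \<theta> \<and>
           (\<forall>a<N. \<forall>b<N. superenergy N g gi 2 \<Omega> a b = superenergy N g gi q (wedge q \<theta>) a b)"
proof -
  obtain k l where kl: "xs0 = [k, l]" "k < N" "l < N" using xs0(1) by (elim idx2E)
  have "\<forall>xs\<in>idx N 2. wedge 2 (\<lambda>i a. if i = 0 then \<Omega> [k, a] / \<Omega> [k, l] else \<Omega> [l, a]) xs = \<Omega> xs"
    using two_form_simple[OF f kl(2,3)] xs0(2) kl(1) pl_small[OF f N(1) _ _ kl(2,3)] by auto
  then show ?thesis using finish[of 2 N _ \<Omega> xs0] N xs0 by auto
qed

lemma nz_sorted:
  assumes "is_form N p \<Omega>" "\<exists>xs\<in>idx N p. \<Omega> xs \<noteq> 0"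
  shows "\<exists>xs\<in>idx N p. sorted_wrt (<) xs \<and> \<Omega> xs \<noteq> 0"
  using form_zero_sorted[OF assms(1)] assms(2) by blast

lemma sorted33: "xs \<in> idx 3 3 \<Longrightarrow> sorted_wrt (<) xs \<Longrightarrow> xs = [0, 1, 2]"
  by (elim idx3E) auto

lemma sorted44: "xs \<in> idx 4 4 \<Longrightarrow> sorted_wrt (<) xs \<Longrightarrow> xs = [0, 1, 2, 3]"
  by (elim idx4E) auto

lemma sorted43: "xs \<in> idx 4 3 \<Longrightarrow> sorted_wrt (<) xs \<Longrightarrow>
   xs = [1, 2, 3] \<or> xs = [0, 2, 3] \<or> xs = [0, 1, 3] \<or> xs = [0, 1, 2]"
  by (elim idx3E) auto

lemma case_33:
  assumes f: "is_form 3 3 \<Omega>" and nz: "\<exists>xs\<in>idx 3 3. \<Omega> xs \<noteq> 0"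
  shows "\<exists>q \<theta>. 1 \<le> q \<and> q \<le> 3 \<and> lin_indep_forms 3 q \<theta> \<and>
           (\<forall>a<3. \<forall>b<3. superenergy 3 g gi 3 \<Omega> a b = superenergy 3 g gi q (wedge q \<theta>) a b)"
proof -
  define \<theta> :: "nat \<Rightarrow> nat \<Rightarrow> real" where "\<theta> = (\<lambda>r a. if r = a then (if r = 0 then \<Omega> [0, 1, 2] else 1) else (0::real))"
  have l: "[0, 1, 2] \<in> idx 3 3" unfolding idx_def by auto
  have "\<forall>xs\<in>idx 3 3. wedge 3 \<theta> xs = \<Omega> xs"
  proof (rule forms_eq_sorted[OF wedge_form f], intro ballI impI)
    fix xs assume "xs \<in> idx 3 3" "sorted_wrt (<) xs"
    then have "xs = [0, 1, 2]" by (rule sorted33)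
    then show "wedge 3 \<theta> xs = \<Omega> xs"
      by (simp add: \<theta>_def numeral_3_eq_3 wedge_Suc wedge1' lessThan_Suc)
  qed
  moreover have "\<Omega> [0, 1, 2] \<noteq> 0" using nz_sorted[OF f nz] sorted33 by blast
  ultimately show ?thesis using finish[of 3 3 \<theta> \<Omega> "[0,1,2]"] l by auto
qed

lemma case_44:
  assumes f: "is_form 4 4 \<Omega>" and nz: "\<exists>xs\<in>idx 4 4. \<Omega> xs \<noteq> 0"
  shows "\<exists>q \<theta>. 1 \<le> q \<and> q \<le> 4 \<and> lin_indep_forms 4 q \<theta> \<and>
           (\<forall>a<4. \<forall>b<4. superenergy 4 g gi 4 \<Omega> a b = superenergy 4 g gi q (wedge q \<theta>) a b)"
proof -
  define \<theta> :: "nat \<Rightarrow> nat \<Rightarrow> real" where "\<theta> = (\<lambda>r a. if r = a then (if r = 0 then \<Omega> [0, 1, 2, 3] else 1) else (0::real))"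
  have l: "[0, 1, 2, 3] \<in> idx 4 4" unfolding idx_def by auto
  have "\<forall>xs\<in>idx 4 4. wedge 4 \<theta> xs = \<Omega> xs"
  proof (rule forms_eq_sorted[OF wedge_form f], intro ballI impI)
    fix xs assume "xs \<in> idx 4 4" "sorted_wrt (<) xs"
    then have "xs = [0, 1, 2, 3]" by (rule sorted44)
    then show "wedge 4 \<theta> xs = \<Omega> xs"
      by (simp add: \<theta>_def numeral_eq_Suc wedge_Suc wedge1' lessThan_Suc)
  qed
  moreover have "\<Omega> [0, 1, 2, 3] \<noteq> 0" using nz_sorted[OF f nz] sorted44 by blast
  ultimately show ?thesis using finish[of 4 4 \<theta> \<Omega> "[0,1,2,3]"] l by auto
qed


lemma case_43:
  assumes f: "is_form 4 3 \<Omega>" and nz: "\<exists>xs\<in>idx 4 3. \<Omega> xs \<noteq> 0"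
  shows "\<exists>q \<theta>. 1 \<le> q \<and> q \<le> 4 \<and> lin_indep_forms 4 q \<theta> \<and>
           (\<forall>a<4. \<forall>b<4. superenergy 4 g gi 3 \<Omega> a b = superenergy 4 g gi q (wedge q \<theta>) a b)"
proof -
  define A0 where "A0 = \<Omega> [1, 2, 3]"
  define A1 where "A1 = \<Omega> [0, 2, 3]"
  define A2 where "A2 = \<Omega> [0, 1, 3]"
  define A3 where "A3 = \<Omega> [0, 1, 2]"
  have fin: "\<exists>q \<theta>. 1 \<le> q \<and> q \<le> 4 \<and> lin_indep_forms 4 q \<theta> \<and>
           (\<forall>a<4. \<forall>b<4. superenergy 4 g gi 3 \<Omega> a b = superenergy 4 g gi q (wedge q \<theta>) a b)"
    if w: "wedge 3 \<theta> [1, 2, 3] = A0" "wedge 3 \<theta> [0, 2, 3] = A1"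
          "wedge 3 \<theta> [0, 1, 3] = A2" "wedge 3 \<theta> [0, 1, 2] = A3"
      and xs0: "xs0 \<in> idx 4 3" "\<Omega> xs0 \<noteq> 0" for \<theta> xs0
  proof -
    have "\<forall>xs\<in>idx 4 3. wedge 3 \<theta> xs = \<Omega> xs"
    proof (rule forms_eq_sorted[OF wedge_form f], intro ballI impI)
      fix xs assume "xs \<in> idx 4 3" "sorted_wrt (<) xs"
      then show "wedge 3 \<theta> xs = \<Omega> xs" using sorted43 w unfolding A0_def A1_def A2_def A3_def by blast
    qed
    then show ?thesis using finish[of 3 4 \<theta> \<Omega> xs0] xs0 by auto
  qed
  have i0: "[1, 2, 3] \<in> idx 4 3" and i1: "[0, 2, 3] \<in> idx 4 3" and i2: "[0, 1, 3] \<in> idx 4 3"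
    and i3: "[0, 1, 2] \<in> idx 4 3" unfolding idx_def by auto
  have "A0 \<noteq> 0 \<or> A1 \<noteq> 0 \<or> A2 \<noteq> 0 \<or> A3 \<noteq> 0"
    using nz_sorted[OF f nz] sorted43 unfolding A0_def A1_def A2_def A3_def by blast
  then show ?thesis
  proof (elim disjE)
    assume h: "A0 \<noteq> 0"
    let ?M = "[[A1/A0, 1, 0, 0], [- A2/A0, 0, 1, 0], [A3, 0, 0, A0]]"
    show ?thesis
      by (rule fin[of "\<lambda>r a. ?M ! r ! a" "[1,2,3]", OF _ _ _ _ i0 h[unfolded A0_def]])
         (use h in \<open>simp_all add: A0_def[symmetric] numeral_eq_Suc wedge_Suc wedge1' lessThan_Suc field_simps\<close>)
  next
    assume h: "A1 \<noteq> 0"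
    let ?M = "[[1, A0/A1, 0, 0], [0, A2/A1, 1, 0], [0, - A3, 0, A1]]"
    show ?thesis
      by (rule fin[of "\<lambda>r a. ?M ! r ! a" "[0,2,3]", OF _ _ _ _ i1 h[unfolded A1_def]])
         (use h in \<open>simp_all add: A1_def[symmetric] numeral_eq_Suc wedge_Suc wedge1' lessThan_Suc field_simps\<close>)
  next
    assume h: "A2 \<noteq> 0"
    let ?M = "[[1, 0, - A0/A2, 0], [0, 1, A1/A2, 0], [0, 0, A3, A2]]"
    show ?thesis
      by (rule fin[of "\<lambda>r a. ?M ! r ! a" "[0,1,3]", OF _ _ _ _ i2 h[unfolded A2_def]])
         (use h in \<open>simp_all add: A2_def[symmetric] numeral_eq_Suc wedge_Suc wedge1' lessThan_Suc field_simps\<close>)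
  next
    assume h: "A3 \<noteq> 0"
    let ?M = "[[1, 0, 0, A0/A3], [0, 1, 0, - A1/A3], [0, 0, A3, A2]]"
    show ?thesis
      by (rule fin[of "\<lambda>r a. ?M ! r ! a" "[0,1,2]", OF _ _ _ _ i3 h[unfolded A3_def]])
         (use h in \<open>simp_all add: A3_def[symmetric] numeral_eq_Suc wedge_Suc wedge1' lessThan_Suc field_simps\<close>)
  qed
qed


definition mN :: "nat \<Rightarrow> (nat \<Rightarrow> nat \<Rightarrow> real) \<Rightarrow> real mat" where
  "mN N h = mat N N (\<lambda>(i,j). h i j)"

lemma mN_carrier[simp]: "mN N h \<in> carrier_mat N N" unfolding mN_def by simp
lemma mN_dims[simp]: "dim_row (mN N h) = N" "dim_col (mN N h) = N" unfolding mN_def by simp_all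
lemma mN_index[simp]: "i < N \<Longrightarrow> j < N \<Longrightarrow> mN N h $$ (i,j) = h i j" unfolding mN_def by simp

lemma mult_carrierN: "A \<in> carrier_mat N N \<Longrightarrow> B \<in> carrier_mat N N \<Longrightarrow> A * B \<in> carrier_mat N N"
  by (rule mult_carrier_mat)

lemma transpose_carrierN: "A \<in> carrier_mat N N \<Longrightarrow> A\<^sup>T \<in> carrier_mat N N"
  by simp

lemma mult_index:
  "A \<in> carrier_mat N N \<Longrightarrow> B \<in> carrier_mat N N \<Longrightarrow> i < N \<Longrightarrow> j < N \<Longrightarrow>
   (A * B) $$ (i,j) = (\<Sum>k<N. A $$ (i,k) * B $$ (k,j))"
  by (simp add: scalar_prod_def lessThan_atLeast0)

lemma frame:
  assumes lor: "lorentzian N g" and inv: "inverse_metric N g gi"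
  obtains Em Fm where "Em \<in> carrier_mat N N" "Fm \<in> carrier_mat N N" "Fm * Em = 1\<^sub>m N" "Em * Fm = 1\<^sub>m N"
    "Fm * mN N gi * Fm\<^sup>T = mN N eta" "mN N g = Fm\<^sup>T * mN N eta * Fm" "(mN N gi)\<^sup>T = mN N gi"
proof -
  from lor obtain e where sym: "\<forall>a<N. \<forall>b<N. g a b = g b a"
    and e: "\<forall>i<N. \<forall>j<N. (\<Sum>a<N. \<Sum>b<N. g a b * e a i * e b j) = eta i j"
    unfolding lorentzian_def by blast
  define E where "E = mN N e"
  define G where "G = mN N g"
  define GI where "GI = mN N gi"
  define H where "H = mN N eta"
  define F where "F = H * E\<^sup>T * G"
  have c[simp]: "E \<in> carrier_mat N N" "G \<in> carrier_mat N N" "GI \<in> carrier_mat N N" "H \<in> carrier_mat N N"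
    unfolding E_def G_def GI_def H_def by simp_all
  have d[simp]: "dim_row E = N" "dim_col E = N" "dim_row G = N" "dim_col G = N"
    "dim_row GI = N" "dim_col GI = N" "dim_row H = N" "dim_col H = N"
    unfolding E_def G_def GI_def H_def by simp_all
  have cET[simp]: "E\<^sup>T \<in> carrier_mat N N" by (rule transpose_carrierN[OF c(1)])
  have cETG[simp]: "E\<^sup>T * G \<in> carrier_mat N N" by (rule mult_carrierN[OF cET c(2)])
  have cF[simp]: "F \<in> carrier_mat N N" unfolding F_def by (rule mult_carrierN[OF mult_carrierN[OF c(4) cET] c(2)])
  have cFT[simp]: "F\<^sup>T \<in> carrier_mat N N" by (rule transpose_carrierN[OF cF])
  have cHH[simp]: "H * H \<in> carrier_mat N N" by (rule mult_carrierN[OF c(4) c(4)])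
  note assoc = assoc_mult_mat[of _ N N _ N _ N]
  have EGE: "E\<^sup>T * G * E = H"
  proof (rule eq_matI)
    fix i j assume "i < dim_row H" "j < dim_col H"
    then have ij: "i < N" "j < N" by (simp_all add: H_def)
    have "(E\<^sup>T * G * E) $$ (i,j) = (\<Sum>k<N. (\<Sum>a<N. e a i * g a k) * e k j)"
      using ij apply (simp add: mult_index[of _ N] del: index_mult_mat) by (simp add: E_def G_def)
    also have "\<dots> = (\<Sum>a<N. \<Sum>b<N. g a b * e a i * e b j)"
      unfolding sum_distrib_right by (subst sum.swap) (simp add: mult_ac)
    also have "\<dots> = H $$ (i,j)" using e ij by (simp add: H_def)
    finally show "(E\<^sup>T * G * E) $$ (i,j) = H $$ (i,j)" .
  qed (simp_all add: H_def E_def)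
  have GGI: "G * GI = 1\<^sub>m N"
  proof (rule eq_matI)
    fix i j assume "i < dim_row (1\<^sub>m N :: real mat)" "j < dim_col (1\<^sub>m N :: real mat)"
    then show "(G * GI) $$ (i,j) = 1\<^sub>m N $$ (i,j)"
      using inv unfolding inverse_metric_def apply (simp add: mult_index[of _ N] del: index_mult_mat) by (simp add: G_def GI_def)
  qed simp_all
  have GT: "G\<^sup>T = G" using sym by (intro eq_matI) (auto simp: G_def)
  have HT: "H\<^sup>T = H" by (intro eq_matI) (auto simp: H_def eta_def)
  have HH: "H * H = 1\<^sub>m N"
  proof (rule eq_matI)
    fix i j assume "i < dim_row (1\<^sub>m N :: real mat)" "j < dim_col (1\<^sub>m N :: real mat)"
    then have ij: "i < N" "j < N" by simp_all
    have "(H * H) $$ (i,j) = (\<Sum>k<N. eta i k * eta k j)" using ij apply (simp add: mult_index[of _ N] del: index_mult_mat) by (simp add: H_def)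
    also have "\<dots> = (\<Sum>k\<in>{i}. eta i k * eta k j)" using ij
      by (intro sum.mono_neutral_right) (auto simp: eta_def)
    also have "\<dots> = 1\<^sub>m N $$ (i,j)" using ij by (simp add: eta_def)
    finally show "(H * H) $$ (i,j) = 1\<^sub>m N $$ (i,j)" .
  qed simp_all
  have FE: "F * E = 1\<^sub>m N"
  proof -
    have "F * E = H * (E\<^sup>T * G * E)" unfolding F_def by (simp add: assoc mult_carrierN)
    then show ?thesis using EGE HH by simp
  qed
  have EF: "E * F = 1\<^sub>m N" by (rule mat_mult_left_right_inverse[OF cF c(1) FE])
  have GIe: "GI = E * H * E\<^sup>T"
  proof -
    have "E * H * E\<^sup>T = E * H * E\<^sup>T * (G * GI)" using GGI by simp
    also have "\<dots> = (E * F) * GI" unfolding F_def by (simp add: assoc mult_carrierN)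
    finally show ?thesis using EF by simp
  qed
  have ETFT: "E\<^sup>T * F\<^sup>T = 1\<^sub>m N" using FE by (metis c(1) cF transpose_mult transpose_one)
  have FTET: "F\<^sup>T * E\<^sup>T = 1\<^sub>m N" using EF by (metis c(1) cF transpose_mult transpose_one)
  have FGIF: "F * GI * F\<^sup>T = H"
  proof -
    have "F * GI * F\<^sup>T = (F * E) * H * (E\<^sup>T * F\<^sup>T)" unfolding GIe by (simp add: assoc mult_carrierN)
    then show ?thesis using FE ETFT by simp
  qed
  have GF: "G = F\<^sup>T * H * F"
  proof -
    have "F\<^sup>T * H * F = (F\<^sup>T * E\<^sup>T) * G * (E * F)" unfolding EGE[symmetric] by (simp add: assoc mult_carrierN)
    then show ?thesis using FTET EF by simp
  qed
  have GIT: "GI\<^sup>T = GI" unfolding GIe using HT by (simp add: transpose_mult[of _ N N _ N] assoc mult_carrierN)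
  show ?thesis
    by (rule that[of E F]) (use FE EF FGIF GF GIT in \<open>simp_all add: G_def GI_def H_def\<close>)
qed


lemma sum4_perm:
  "(\<Sum>i<N. \<Sum>k<N. \<Sum>m<N. \<Sum>j<N. f i j k m) = (\<Sum>i<N. \<Sum>j<N. \<Sum>k<N. \<Sum>m<N. (f i j k m :: real))"
proof (rule sum.cong[OF refl])
  fix i
  have "(\<Sum>k<N. \<Sum>m<N. \<Sum>j<N. f i j k m) = (\<Sum>k<N. \<Sum>j<N. \<Sum>m<N. f i j k m)"
    by (rule sum.cong[OF refl], rule sum.swap)
  also have "\<dots> = (\<Sum>j<N. \<Sum>k<N. \<Sum>m<N. f i j k m)" by (rule sum.swap)
  finally show "(\<Sum>k<N. \<Sum>m<N. \<Sum>j<N. f i j k m) = (\<Sum>j<N. \<Sum>k<N. \<Sum>m<N. f i j k m)" .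
qed

definition trN :: "nat \<Rightarrow> real mat \<Rightarrow> real" where
  "trN N A = (\<Sum>i<N. A $$ (i,i))"

lemma trN_comm:
  assumes "A \<in> carrier_mat N N" "B \<in> carrier_mat N N"
  shows "trN N (A * B) = trN N (B * A)"
proof -
  have "trN N (A * B) = (\<Sum>i<N. \<Sum>k<N. A $$ (i,k) * B $$ (k,i))"
    unfolding trN_def using assms by (simp add: mult_index[of _ N] del: index_mult_mat)
  also have "\<dots> = (\<Sum>k<N. \<Sum>i<N. B $$ (k,i) * A $$ (i,k))" by (subst sum.swap) (simp add: mult.commute)
  also have "\<dots> = trN N (B * A)"
    unfolding trN_def using assms by (simp add: mult_index[of _ N] del: index_mult_mat)
  finally show ?thesis .
qed

lemma se2_mat:
  assumes ab: "a < N" "b < N"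
  shows "superenergy N g gi 2 \<Phi> a b =
     - (mN N (\<lambda>x y. \<Phi> [x, y]) * mN N gi * (mN N (\<lambda>x y. \<Phi> [x, y]))\<^sup>T) $$ (a,b)
     + 1/4 * trN N (mN N (\<lambda>x y. \<Phi> [x, y]) * mN N gi * (mN N (\<lambda>x y. \<Phi> [x, y]))\<^sup>T * (mN N gi)\<^sup>T) * g a b"
proof -
  let ?P = "mN N (\<lambda>x y. \<Phi> [x, y])" and ?GI = "mN N gi"
  have cP: "?P \<in> carrier_mat N N" "?P\<^sup>T \<in> carrier_mat N N" "?GI\<^sup>T \<in> carrier_mat N N" by simp_all
  have cPG: "?P * ?GI \<in> carrier_mat N N" "?P * ?GI * ?P\<^sup>T \<in> carrier_mat N N"
    by (simp_all add: mult_carrierN)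
  have S1: "(\<Sum>xs\<in>idx N 1. \<Sum>ys\<in>idx N 1. \<Phi> (a # xs) * \<Phi> (b # ys) * contr gi xs ys) =
     (\<Sum>x<N. \<Sum>y<N. \<Phi> [a, x] * \<Phi> [b, y] * gi x y)"
    unfolding One_nat_def sum_idx_Suc idx_0 by (simp add: contr_def)
  have M1: "(?P * ?GI * ?P\<^sup>T) $$ (a,b) = (\<Sum>x<N. \<Sum>y<N. \<Phi> [a, x] * \<Phi> [b, y] * gi x y)"
  proof -
    have "(?P * ?GI * ?P\<^sup>T) $$ (a,b) = (\<Sum>k<N. (\<Sum>j<N. \<Phi> [a, j] * gi j k) * \<Phi> [b, k])"
      using ab by (simp add: mult_index[OF cPG(1) cP(2)] mult_index[OF cP(1) mN_carrier] del: index_mult_mat)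
    also have "\<dots> = (\<Sum>k<N. \<Sum>j<N. \<Phi> [a, j] * \<Phi> [b, k] * gi j k)"
      by (simp add: sum_distrib_left sum_distrib_right mult_ac)
    also have "\<dots> = (\<Sum>x<N. \<Sum>y<N. \<Phi> [a, x] * \<Phi> [b, y] * gi x y)" by (rule sum.swap)
    finally show ?thesis .
  qed
  have F: "fdot N gi 2 \<Phi> = (\<Sum>x<N. \<Sum>y<N. \<Sum>z<N. \<Sum>w<N. \<Phi> [x, y] * \<Phi> [z, w] * (gi x z * gi y w))"
    unfolding fdot_def numeral_2_eq_2 sum_idx_Suc idx_0
    by (simp add: contr_def lessThan_Suc_eq_insert_0 sum_distrib_left sum_distrib_right mult_ac)
  have M2: "trN N (?P * ?GI * ?P\<^sup>T * ?GI\<^sup>T) = fdot N gi 2 \<Phi>"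
  proof -
    have "trN N (?P * ?GI * ?P\<^sup>T * ?GI\<^sup>T) = (\<Sum>i<N. \<Sum>k<N. (\<Sum>m<N. (\<Sum>j<N. \<Phi> [i, j] * gi j m) * \<Phi> [k, m]) * gi i k)"
      unfolding trN_def
      by (simp add: mult_index[OF cPG(2) cP(3)] mult_index[OF cPG(1) cP(2)]
          mult_index[OF cP(1) mN_carrier] mult_carrierN del: index_mult_mat)
    also have "\<dots> = (\<Sum>i<N. \<Sum>k<N. \<Sum>m<N. \<Sum>j<N. \<Phi> [i, j] * \<Phi> [k, m] * (gi i k * gi j m))"
      by (simp add: sum_distrib_left sum_distrib_right mult_ac)
    also have "\<dots> = (\<Sum>i<N. \<Sum>j<N. \<Sum>k<N. \<Sum>m<N. \<Phi> [i, j] * \<Phi> [k, m] * (gi i k * gi j m))"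
      by (rule sum4_perm)
    finally show ?thesis using F by simp
  qed
  show ?thesis unfolding superenergy_def using S1 M1 M2 by (simp add: numeral_2_eq_2)
qed


lemma sandwich:
  assumes cF: "F \<in> carrier_mat N N" and cM: "M \<in> carrier_mat N N" and ab: "a < N" "b < N"
  shows "(F\<^sup>T * M * F) $$ (a,b) = (\<Sum>k<N. \<Sum>l<N. F $$ (k,a) * M $$ (k,l) * F $$ (l,b))"
proof -
  have c1: "F\<^sup>T * M \<in> carrier_mat N N" using cF cM by (simp add: mult_carrierN)
  have "(F\<^sup>T * M * F) $$ (a,b) = (\<Sum>l<N. (F\<^sup>T * M) $$ (a,l) * F $$ (l,b))"
    by (rule mult_index[OF c1 cF ab])
  also have "\<dots> = (\<Sum>l<N. (\<Sum>k<N. F $$ (k,a) * M $$ (k,l)) * F $$ (l,b))"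
    using ab cF cM by (intro sum.cong refl) (simp add: mult_index[of "F\<^sup>T" N M] del: index_mult_mat)
  also have "\<dots> = (\<Sum>l<N. \<Sum>k<N. F $$ (k,a) * M $$ (k,l) * F $$ (l,b))"
    by (simp add: sum_distrib_right)
  also have "\<dots> = (\<Sum>k<N. \<Sum>l<N. F $$ (k,a) * M $$ (k,l) * F $$ (l,b))" by (rule sum.swap)
  finally show ?thesis .
qed

lemma se2_transfer:
  fixes F X :: "real mat"
  assumes cF: "F \<in> carrier_mat N N" and cX: "X \<in> carrier_mat N N"
    and FGIF: "F * mN N gi * F\<^sup>T = mN N eta"
    and GF: "mN N g = F\<^sup>T * mN N eta * F"
    and GIT: "(mN N gi)\<^sup>T = mN N gi"
    and P: "mN N (\<lambda>x y. \<Phi> [x, y]) = F\<^sup>T * X * F"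
    and ab: "a < N" "b < N"
  shows "superenergy N g gi 2 \<Phi> a b = (\<Sum>k<N. \<Sum>l<N. F $$ (k,a) * F $$ (l,b) *
     (- (X * mN N eta * X\<^sup>T) $$ (k,l) + 1/4 * trN N (X * mN N eta * X\<^sup>T * mN N eta) * eta k l))"
proof -
  let ?H = "mN N eta" and ?GI = "mN N gi" and ?P = "mN N (\<lambda>x y. \<Phi> [x, y])"
  let ?M = "X * ?H * X\<^sup>T"
  note assoc = assoc_mult_mat[of _ N N _ N _ N]
  have c: "?H \<in> carrier_mat N N" "?GI \<in> carrier_mat N N" "F\<^sup>T \<in> carrier_mat N N" "X\<^sup>T \<in> carrier_mat N N"
    using cF cX by simp_all
  have cM: "?M \<in> carrier_mat N N" using c cX by (simp add: mult_carrierN)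
  have PT: "?P\<^sup>T = F\<^sup>T * X\<^sup>T * F" unfolding P using cF cX c
    by (simp add: transpose_mult[of _ N N _ N] mult_carrierN assoc)
  have PGP: "?P * ?GI * ?P\<^sup>T = F\<^sup>T * ?M * F"
  proof -
    have "?P * ?GI * ?P\<^sup>T = F\<^sup>T * X * (F * ?GI * F\<^sup>T) * X\<^sup>T * F"
      unfolding PT unfolding P using cF cX c by (simp add: mult_carrierN assoc)
    also have "\<dots> = F\<^sup>T * ?M * F" unfolding FGIF using cF cX c by (simp add: mult_carrierN assoc)
    finally show ?thesis .
  qed
  have TR: "trN N (?P * ?GI * ?P\<^sup>T * ?GI\<^sup>T) = trN N (?M * ?H)"
  proof -
    have "trN N (?P * ?GI * ?P\<^sup>T * ?GI\<^sup>T) = trN N (F\<^sup>T * (?M * F * ?GI))"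
      unfolding PGP GIT using cF cX c cM by (simp add: mult_carrierN assoc)
    also have "\<dots> = trN N (?M * F * ?GI * F\<^sup>T)"
      using cF cX c cM by (simp add: trN_comm[of "F\<^sup>T" N] mult_carrierN)
    also have "\<dots> = trN N (?M * ?H)" unfolding FGIF[symmetric] using cF cX c cM by (simp add: mult_carrierN assoc)
    finally show ?thesis .
  qed
  have gab: "g a b = (F\<^sup>T * ?H * F) $$ (a,b)" using GF ab by (metis mN_index)
  have "superenergy N g gi 2 \<Phi> a b = - (F\<^sup>T * ?M * F) $$ (a,b) + 1/4 * trN N (?M * ?H) * (F\<^sup>T * ?H * F) $$ (a,b)"
    using se2_mat[OF ab, of g gi \<Phi>] PGP TR gab by simp
  also have "\<dots> = - (\<Sum>k<N. \<Sum>l<N. F $$ (k,a) * ?M $$ (k,l) * F $$ (l,b))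
      + 1/4 * trN N (?M * ?H) * (\<Sum>k<N. \<Sum>l<N. F $$ (k,a) * ?H $$ (k,l) * F $$ (l,b))"
    using sandwich[OF cF cM ab] sandwich[OF cF c(1) ab] by simp
  also have "\<dots> = (\<Sum>k<N. \<Sum>l<N. F $$ (k,a) * F $$ (l,b) *
     (- ?M $$ (k,l) + 1/4 * trN N (?M * ?H) * eta k l))"
    by (simp add: sum_distrib_left sum_subtractf sum.distrib sum_negf sum_divide_distrib algebra_simps)
  finally show ?thesis .
qed


definition A6 :: "real \<Rightarrow> real \<Rightarrow> real \<Rightarrow> real \<Rightarrow> real \<Rightarrow> real \<Rightarrow> nat \<Rightarrow> nat \<Rightarrow> real" where
  "A6 a01 a02 a03 a12 a13 a23 i j =
     [[0, a01, a02, a03], [- a01, 0, a12, a13], [- a02, - a12, 0, a23], [- a03, - a13, - a23, 0]] ! i ! j"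

lemma less4: "i < (4::nat) \<Longrightarrow> i = 0 \<or> i = 1 \<or> i = 2 \<or> i = 3" by auto

lemma pl4:
  assumes pl: "a01 * a23 - a02 * a13 + a03 * a12 = 0"
    and ijkl: "i < 4" "j < 4" "k < 4" "l < 4"
  shows "A6 a01 a02 a03 a12 a13 a23 i j * A6 a01 a02 a03 a12 a13 a23 k l =
         A6 a01 a02 a03 a12 a13 a23 k i * A6 a01 a02 a03 a12 a13 a23 l j -
         A6 a01 a02 a03 a12 a13 a23 k j * A6 a01 a02 a03 a12 a13 a23 l i"
proof -
  have pl': "a01 * a23 = a02 * a13 - a03 * a12" using pl by simp
  show ?thesis
  using less4[OF ijkl(1)] less4[OF ijkl(2)] less4[OF ijkl(3)] less4[OF ijkl(4)]
  by (auto simp: A6_def numeral_eq_Suc pl' algebra_simps)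
qed


definition Tf :: "(nat \<Rightarrow> nat \<Rightarrow> real) \<Rightarrow> nat \<Rightarrow> nat \<Rightarrow> real" where
  "Tf m k l = - (\<Sum>j<4. m k j * eta j j * m l j)
     + 1/4 * (\<Sum>a<4. \<Sum>j<4. m a j * eta j j * m a j * eta a a) * eta k l"

lemma T_rot:
  assumes "k < 4" "l < 4"
  shows "Tf (A6 (c*w01 + s*w23) (c*w02 - s*w13) (c*w03 + s*w12) (c*w12 - s*w03) (c*w13 + s*w02) (c*w23 - s*w01)) k l
     = (c^2 + s^2) * Tf (A6 w01 w02 w03 w12 w13 w23) k l"
proof -
  have k: "k \<in> {0,1,2,3}" and l: "l \<in> {0,1,2,3}" using assms by auto
  have "\<forall>k\<in>{0,1,2,3::nat}. \<forall>l\<in>{0,1,2,3::nat}.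
    Tf (A6 (c*w01 + s*w23) (c*w02 - s*w13) (c*w03 + s*w12) (c*w12 - s*w03) (c*w13 + s*w02) (c*w23 - s*w01)) k l
     = (c^2 + s^2) * Tf (A6 w01 w02 w03 w12 w13 w23) k l"
    apply (simp add: Tf_def A6_def eta_def numeral_eq_Suc)
    apply (simp add: field_simps power2_eq_square)
    done
  then show ?thesis using k l by blast
qed


lemma eta_delta: "j' < N \<Longrightarrow> (\<Sum>j<N. m j * eta j j') = m j' * eta j' j'"
proof -
  assume j': "j' < N"
  have "(\<Sum>j<N. m j * eta j j') = (\<Sum>j<N. if j = j' then m j' * eta j' j' else 0)"
    by (intro sum.cong refl) (auto simp: eta_def)
  also have "\<dots> = m j' * eta j' j'" using j' by (simp add: sum.delta)
  finally show ?thesis .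
qed

lemma XHX:
  assumes "k < N" "l < N"
  shows "(mN N m * mN N eta * (mN N m)\<^sup>T) $$ (k,l) = (\<Sum>j<N. m k j * eta j j * m l j)"
proof -
  have c: "mN N m * mN N eta \<in> carrier_mat N N" by (simp add: mult_carrierN)
  have "(mN N m * mN N eta * (mN N m)\<^sup>T) $$ (k,l) = (\<Sum>j'<N. (mN N m * mN N eta) $$ (k,j') * (mN N m)\<^sup>T $$ (j',l))"
    using assms by (intro mult_index[OF c]) simp_all
  also have "\<dots> = (\<Sum>j'<N. (\<Sum>j<N. m k j * eta j j') * m l j')"
    using assms by (intro sum.cong refl) (simp add: mult_index[of _ N] del: index_mult_mat)
  also have "\<dots> = (\<Sum>j<N. m k j * eta j j * m l j)"
    by (intro sum.cong refl) (simp add: eta_delta[where m = "m k"])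
  finally show ?thesis .
qed

lemma trXH:
  "trN N (mN N m * mN N eta * (mN N m)\<^sup>T * mN N eta) = (\<Sum>a<N. \<Sum>j<N. m a j * eta j j * m a j * eta a a)"
proof -
  have c: "mN N m * mN N eta * (mN N m)\<^sup>T \<in> carrier_mat N N" by (simp add: mult_carrierN)
  have "trN N (mN N m * mN N eta * (mN N m)\<^sup>T * mN N eta) =
      (\<Sum>a<N. \<Sum>l<N. (mN N m * mN N eta * (mN N m)\<^sup>T) $$ (a,l) * eta l a)"
    unfolding trN_def by (intro sum.cong refl) (simp add: mult_index[OF c mN_carrier] del: index_mult_mat)
  also have "\<dots> = (\<Sum>a<N. (mN N m * mN N eta * (mN N m)\<^sup>T) $$ (a,a) * eta a a)"
  proof (rule sum.cong[OF refl])
    fix a assume "a \<in> {..<N}"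
    then show "(\<Sum>l<N. (mN N m * mN N eta * (mN N m)\<^sup>T) $$ (a,l) * eta l a) = (mN N m * mN N eta * (mN N m)\<^sup>T) $$ (a,a) * eta a a"
      using eta_delta[of a N "\<lambda>l. (mN N m * mN N eta * (mN N m)\<^sup>T) $$ (a,l)"] by simp
  qed
  also have "\<dots> = (\<Sum>a<N. \<Sum>j<N. m a j * eta j j * m a j * eta a a)"
    by (intro sum.cong refl) (simp add: XHX sum_distrib_right del: index_mult_mat)
  finally show ?thesis .
qed

lemma Tf_mat:
  assumes "k < 4" "l < 4"
  shows "- (mN 4 m * mN 4 eta * (mN 4 m)\<^sup>T) $$ (k,l) + 1/4 * trN 4 (mN 4 m * mN 4 eta * (mN 4 m)\<^sup>T * mN 4 eta) * eta k l
     = Tf m k l"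
  unfolding Tf_def XHX[OF assms] trXH by simp

lemma mat_A6:
  assumes X: "X \<in> carrier_mat 4 4" and as: "\<forall>i<4. \<forall>j<4. X $$ (j,i) = - X $$ (i,j)"
  shows "X = mN 4 (A6 (X $$ (0,1)) (X $$ (0,2)) (X $$ (0,3)) (X $$ (1,2)) (X $$ (1,3)) (X $$ (2,3)))"
proof (rule eq_matI)
  have d: "X $$ (i,i) = 0" if "i < 4" for i using as[rule_format, OF that that] by linarith
  have o: "X $$ (1,0) = - X $$ (0,1)" "X $$ (2,0) = - X $$ (0,2)" "X $$ (3,0) = - X $$ (0,3)"
      "X $$ (2,1) = - X $$ (1,2)" "X $$ (3,1) = - X $$ (1,3)" "X $$ (3,2) = - X $$ (2,3)"
    using as[rule_format, of 0 1] as[rule_format, of 0 2] as[rule_format, of 0 3]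
      as[rule_format, of 1 2] as[rule_format, of 1 3] as[rule_format, of 2 3] by simp_all
  have all: "\<forall>i\<in>{0,1,2,3::nat}. \<forall>j\<in>{0,1,2,3::nat}. X $$ (i,j) = A6 (X $$ (0,1)) (X $$ (0,2)) (X $$ (0,3)) (X $$ (1,2)) (X $$ (1,3)) (X $$ (2,3)) i j"
    using d[of 0] d[of 1] d[of 2] d[of 3] o by (simp add: A6_def)
  fix i j assume "i < dim_row (mN 4 (A6 (X $$ (0,1)) (X $$ (0,2)) (X $$ (0,3)) (X $$ (1,2)) (X $$ (1,3)) (X $$ (2,3))))"
    "j < dim_col (mN 4 (A6 (X $$ (0,1)) (X $$ (0,2)) (X $$ (0,3)) (X $$ (1,2)) (X $$ (1,3)) (X $$ (2,3))))"
  then have ij: "i \<in> {0,1,2,3}" "j \<in> {0,1,2,3}" "i < 4" "j < 4" by auto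
  have "X $$ (i,j) = A6 (X $$ (0,1)) (X $$ (0,2)) (X $$ (0,3)) (X $$ (1,2)) (X $$ (1,3)) (X $$ (2,3)) i j"
    using all ij(1,2) by blast
  then show "X $$ (i,j) = mN 4 (A6 (X $$ (0,1)) (X $$ (0,2)) (X $$ (0,3)) (X $$ (1,2)) (X $$ (1,3)) (X $$ (2,3))) $$ (i,j)"
    using ij(3,4) by simp
qed (use X in simp_all)


lemma wedge_sandwich:
  assumes cF: "F \<in> carrier_mat N N" and ab: "a < N" "b < N"
  shows "wedge 2 (\<lambda>r x. if r = 0 then (\<Sum>i<N. u i * F $$ (i,x)) else (\<Sum>i<N. v i * F $$ (i,x))) [a, b]
     = (F\<^sup>T * mN N (\<lambda>i j. u i * v j - v i * u j) * F) $$ (a,b)"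
proof -
  have "(F\<^sup>T * mN N (\<lambda>i j. u i * v j - v i * u j) * F) $$ (a,b)
     = (\<Sum>k<N. \<Sum>l<N. F $$ (k,a) * (u k * v l - v k * u l) * F $$ (l,b))"
    using sandwich[OF cF mN_carrier ab] by simp
  also have "\<dots> = (\<Sum>k<N. \<Sum>l<N. (u k * F $$ (k,a)) * (v l * F $$ (l,b)) - (v k * F $$ (k,a)) * (u l * F $$ (l,b)))"
    by (intro sum.cong refl) (simp add: algebra_simps)
  also have "\<dots> = (\<Sum>i<N. u i * F $$ (i,a)) * (\<Sum>i<N. v i * F $$ (i,b)) - (\<Sum>i<N. v i * F $$ (i,a)) * (\<Sum>i<N. u i * F $$ (i,b))"
    by (simp add: sum_subtractf sum_product)
  finally show ?thesis by (simp add: wedge2)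
qed

lemma exists_cs:
  fixes P B :: real
  shows "\<exists>c s. c^2 + s^2 = 1 \<and> c^2 * P + c * s * B - s^2 * P = 0"
proof (cases "P = 0")
  case True then show ?thesis by (intro exI[of _ 1] exI[of _ 0]) simp
next
  case False
  define D where "D = sqrt (B^2 + 4 * P^2)"
  have D2: "D^2 = B^2 + 4 * P^2" unfolding D_def by simp
  define t where "t = (B + D) / (2 * P)"
  have t2: "2 * P * t = B + D" unfolding t_def using False by simp
  have "(2*P)^2 * (P + t*B - t^2*P) = 4*P^2*P + 2*P*(2*P*t)*B - (2*P*t)^2 * P"
    by (simp add: algebra_simps power2_eq_square)
  also have "\<dots> = P * (4 * P^2 + B^2 - D^2)" unfolding t2 by (simp add: algebra_simps power2_eq_square)
  also have "\<dots> = 0" using D2 by simp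
  finally have q: "P + t*B - t^2*P = 0" using False by simp
  define r where "r = sqrt (1 + t^2)"
  have r0: "r > 0" unfolding r_def by (simp add: add_pos_nonneg)
  have r2: "r^2 = 1 + t^2" unfolding r_def by simp
  have e1: "(1/r)^2 + (t/r)^2 = (1 + t^2) / r^2" by (simp add: power_divide add_divide_distrib)
  have e2: "1 + t^2 \<noteq> 0" using zero_le_power2[of t] by linarith
  have c1: "(1/r)^2 + (t/r)^2 = 1" unfolding e1 r2 using e2 by simp
  show ?thesis
  proof (rule exI[of _ "1/r"], rule exI[of _ "t/r"], rule conjI)
    show "(1/r)^2 + (t/r)^2 = 1" by (rule c1)
    have "(1/r)^2 * P + (1/r) * (t/r) * B - (t/r)^2 * P = (P + t*B - t^2*P) / r^2"
      using r0 by (simp add: power_divide field_simps power2_eq_square)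
    then show "(1/r)^2 * P + (1/r) * (t/r) * B - (t/r)^2 * P = 0" using q by simp
  qed
qed



lemma ex2I: "P a b \<Longrightarrow> a < (n::nat) \<Longrightarrow> b < n \<Longrightarrow> \<exists>k<n. \<exists>l<n. P k l" by blast

lemma A6_zero: "A6 0 0 0 0 0 0 i j = 0" if "i < 4" "j < 4" for i j
  using less4[OF that(1)] less4[OF that(2)] by (auto simp: A6_def)

lemma case_42:
  assumes lor: "lorentzian 4 g" and inv: "inverse_metric 4 g gi" and f: "is_form 4 2 \<Omega>"
    and nz: "\<exists>xs\<in>idx 4 2. \<Omega> xs \<noteq> 0"
  shows "\<exists>q \<theta>. 1 \<le> q \<and> q \<le> 4 \<and> lin_indep_forms 4 q \<theta> \<and>
           (\<forall>a<4. \<forall>b<4. superenergy 4 g gi 2 \<Omega> a b = superenergy 4 g gi q (wedge q \<theta>) a b)"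
proof -
  obtain E F where cE: "E \<in> carrier_mat 4 4" and cF: "F \<in> carrier_mat 4 4" and FE: "F * E = 1\<^sub>m 4"
    and EF: "E * F = 1\<^sub>m 4" and FGIF: "F * mN 4 gi * F\<^sup>T = mN 4 eta" and GF: "mN 4 g = F\<^sup>T * mN 4 eta * F"
    and GIT: "(mN 4 gi)\<^sup>T = mN 4 gi"
    using frame[OF lor inv] by blast
  define P where "P = mN 4 (\<lambda>x y. \<Omega> [x, y])"
  define X where "X = E\<^sup>T * P * E"
  have cP: "P \<in> carrier_mat 4 4" by (simp add: P_def)
  have cX: "X \<in> carrier_mat 4 4" unfolding X_def using cE cP by (simp add: mult_carrierN)
  note assoc = assoc_mult_mat[of _ 4 4 _ 4 _ 4]
  have PX: "P = F\<^sup>T * X * F"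
  proof -
    have "F\<^sup>T * X * F = (E * F)\<^sup>T * P * (E * F)" unfolding X_def using cE cF cP
      by (simp add: transpose_mult[of _ 4 4 _ 4] assoc mult_carrierN)
    then show ?thesis using EF cP by simp
  qed
  have XP: "X $$ (i,j) = (\<Sum>k<4. \<Sum>l<4. E $$ (k,i) * \<Omega> [k, l] * E $$ (l,j))" if "i < 4" "j < 4" for i j
  proof -
    have "X $$ (i,j) = (\<Sum>k<4. \<Sum>l<4. E $$ (k,i) * P $$ (k,l) * E $$ (l,j))"
      unfolding X_def by (rule sandwich[OF cE cP that])
    also have "\<dots> = (\<Sum>k<4. \<Sum>l<4. E $$ (k,i) * \<Omega> [k, l] * E $$ (l,j))"
      by (intro sum.cong refl) (simp add: P_def)
    finally show ?thesis .
  qed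
  have Xas: "\<forall>i<4. \<forall>j<4. X $$ (j,i) = - X $$ (i,j)"
  proof (intro allI impI)
    fix i j :: nat assume ij: "i < 4" "j < 4"
    have "X $$ (j,i) = (\<Sum>k<4. \<Sum>l<4. E $$ (k,j) * \<Omega> [k, l] * E $$ (l,i))" by (rule XP[OF ij(2,1)])
    also have "\<dots> = (\<Sum>l<4. \<Sum>k<4. E $$ (k,j) * \<Omega> [k, l] * E $$ (l,i))" by (rule sum.swap)
    also have "\<dots> = (\<Sum>l<4. \<Sum>k<4. - (E $$ (l,i) * \<Omega> [l, k] * E $$ (k,j)))"
    proof (intro sum.cong refl)
      fix l k assume "l \<in> {..<4::nat}" "k \<in> {..<4::nat}"
      then have "\<Omega> [k, l] = - \<Omega> [l, k]" using form2_swap[OF f, of l k] by simp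
      then show "E $$ (k,j) * \<Omega> [k, l] * E $$ (l,i) = - (E $$ (l,i) * \<Omega> [l, k] * E $$ (k,j))" by simp
    qed
    also have "\<dots> = - X $$ (i,j)" unfolding XP[OF ij] by (simp add: sum_negf)
    finally show "X $$ (j,i) = - X $$ (i,j)" .
  qed
  define w01 where "w01 = X $$ (0,1)"
  define w02 where "w02 = X $$ (0,2)"
  define w03 where "w03 = X $$ (0,3)"
  define w12 where "w12 = X $$ (1,2)"
  define w13 where "w13 = X $$ (1,3)"
  define w23 where "w23 = X $$ (2,3)"
  have XA: "X = mN 4 (A6 w01 w02 w03 w12 w13 w23)"
    using mat_A6[OF cX Xas] unfolding w01_def w02_def w03_def w12_def w13_def w23_def .
  have wnz: "\<not> (w01 = 0 \<and> w02 = 0 \<and> w03 = 0 \<and> w12 = 0 \<and> w13 = 0 \<and> w23 = 0)"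
  proof
    assume h: "w01 = 0 \<and> w02 = 0 \<and> w03 = 0 \<and> w12 = 0 \<and> w13 = 0 \<and> w23 = 0"
    obtain xs where xs: "xs \<in> idx 4 2" "\<Omega> xs \<noteq> 0" using nz by blast
    then obtain a b where ab: "xs = [a, b]" "a < 4" "b < 4" by (elim idx2E)
    have "P $$ (a,b) = (\<Sum>k<4. \<Sum>l<4. F $$ (k,a) * X $$ (k,l) * F $$ (l,b))"
      unfolding PX by (rule sandwich[OF cF cX ab(2,3)])
    also have "\<dots> = 0" unfolding XA using h by (intro sum.neutral ballI) (simp add: A6_zero)
    finally show False using xs ab by (simp add: P_def)
  qed
  define Pl where "Pl = w01 * w23 - w02 * w13 + w03 * w12"
  define Bq where "Bq = w23 ^ 2 + w13 ^ 2 + w12 ^ 2 - w01 ^ 2 - w02 ^ 2 - w03 ^ 2"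
  obtain c s where cs: "c^2 + s^2 = 1" "c^2 * Pl + c * s * Bq - s^2 * Pl = 0" using exists_cs by blast
  define g01 where "g01 = c*w01 + s*w23"
  define g02 where "g02 = c*w02 - s*w13"
  define g03 where "g03 = c*w03 + s*w12"
  define g12 where "g12 = c*w12 - s*w03"
  define g13 where "g13 = c*w13 + s*w02"
  define g23 where "g23 = c*w23 - s*w01"
  have plg: "g01 * g23 - g02 * g13 + g03 * g12 = 0"
  proof -
    have "g01 * g23 - g02 * g13 + g03 * g12 = c^2 * Pl + c * s * Bq - s^2 * Pl"
      unfolding g01_def g02_def g03_def g12_def g13_def g23_def Pl_def Bq_def
      by (simp add: algebra_simps power2_eq_square)
    then show ?thesis using cs by simp
  qed
  have gnz: "\<not> (g01 = 0 \<and> g02 = 0 \<and> g03 = 0 \<and> g12 = 0 \<and> g13 = 0 \<and> g23 = 0)"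
  proof
    assume h: "g01 = 0 \<and> g02 = 0 \<and> g03 = 0 \<and> g12 = 0 \<and> g13 = 0 \<and> g23 = 0"
    have r1: "c*(c*x + s*y) - s*(c*y - s*x) = x" "c*(c*y - s*x) + s*(c*x + s*y) = y" for x y
    proof -
      have "c*(c*x + s*y) - s*(c*y - s*x) = (c^2+s^2)*x" "c*(c*y - s*x) + s*(c*x + s*y) = (c^2+s^2)*y"
        by (simp_all add: algebra_simps power2_eq_square)
      then show "c*(c*x + s*y) - s*(c*y - s*x) = x" "c*(c*y - s*x) + s*(c*x + s*y) = y" using cs(1) by simp_all
    qed
    have r: "w01 = c * g01 - s * g23" "w23 = c * g23 + s * g01"
      "w02 = c * g02 + s * g13" "w13 = c * g13 - s * g02"
      "w03 = c * g03 - s * g12" "w12 = c * g12 + s * g03"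
      unfolding g01_def g02_def g03_def g12_def g13_def g23_def
      using r1[where x=w01 and y=w23] r1[where x=w13 and y=w02] r1[where x=w03 and y=w12] by simp_all
    then show False using h wnz by simp
  qed
  let ?G = "A6 g01 g02 g03 g12 g13 g23"
  obtain k l where kl: "k < 4" "l < 4" "?G k l \<noteq> 0"
  proof -
    have "?G 0 1 \<noteq> 0 \<or> ?G 0 2 \<noteq> 0 \<or> ?G 0 3 \<noteq> 0 \<or> ?G 1 2 \<noteq> 0 \<or> ?G 1 3 \<noteq> 0 \<or> ?G 2 3 \<noteq> 0"
      using gnz by (simp add: A6_def numeral_eq_Suc)
    then have "\<exists>k<4. \<exists>l<4. ?G k l \<noteq> 0" by (elim disjE) (erule ex2I[where P = "\<lambda>k l. ?G k l \<noteq> 0"], simp, simp)+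
    then show ?thesis using that by blast
  qed
  define u where "u = (\<lambda>i. ?G k i / ?G k l)"
  define v where "v = (\<lambda>i. ?G l i)"
  have uv: "u i * v j - v i * u j = ?G i j" if "i < 4" "j < 4" for i j
  proof -
    have "?G i j * ?G k l = ?G k i * ?G l j - ?G k j * ?G l i" by (rule pl4[OF plg that kl(1,2)])
    then show ?thesis unfolding u_def v_def using kl(3) by (simp add: field_simps)
  qed
  define \<theta> :: "nat \<Rightarrow> nat \<Rightarrow> real" where "\<theta> = (\<lambda>r x. if r = 0 then (\<Sum>i<4. u i * F $$ (i,x)) else (\<Sum>i<4. v i * F $$ (i,x)))"
  let ?Y = "mN 4 ?G"
  have cY: "?Y \<in> carrier_mat 4 4" by simp
  have UV: "mN 4 (\<lambda>i j. u i * v j - v i * u j) = ?Y" by (rule eq_matI) (simp_all add: uv)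
  have W: "mN 4 (\<lambda>x y. wedge 2 \<theta> [x, y]) = F\<^sup>T * ?Y * F"
  proof (rule eq_matI)
    fix a b assume "a < dim_row (F\<^sup>T * ?Y * F)" "b < dim_col (F\<^sup>T * ?Y * F)"
    then have ab: "a < 4" "b < 4" using cF by auto
    show "mN 4 (\<lambda>x y. wedge 2 \<theta> [x, y]) $$ (a,b) = (F\<^sup>T * ?Y * F) $$ (a,b)"
      using wedge_sandwich[OF cF ab, of u v] ab unfolding UV \<theta>_def by simp
  qed (use cF in auto)
  have seO: "superenergy 4 g gi 2 \<Omega> a b = (\<Sum>k<4. \<Sum>l<4. F $$ (k,a) * F $$ (l,b) * Tf (A6 w01 w02 w03 w12 w13 w23) k l)"
    if ab: "a < 4" "b < 4" for a b
    unfolding se2_transfer[OF cF cX FGIF GF GIT PX[unfolded P_def] ab] XA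
  proof (intro sum.cong refl)
    fix k l assume "k \<in> {..<4::nat}" "l \<in> {..<4::nat}"
    then show "F $$ (k,a) * F $$ (l,b) * (- (mN 4 (A6 w01 w02 w03 w12 w13 w23) * mN 4 eta * (mN 4 (A6 w01 w02 w03 w12 w13 w23))\<^sup>T) $$ (k,l) + 1/4 * trN 4 (mN 4 (A6 w01 w02 w03 w12 w13 w23) * mN 4 eta * (mN 4 (A6 w01 w02 w03 w12 w13 w23))\<^sup>T * mN 4 eta) * eta k l)
       = F $$ (k,a) * F $$ (l,b) * Tf (A6 w01 w02 w03 w12 w13 w23) k l"
      by (simp only: Tf_mat lessThan_iff)
  qed
  have seW: "superenergy 4 g gi 2 (wedge 2 \<theta>) a b = (\<Sum>k<4. \<Sum>l<4. F $$ (k,a) * F $$ (l,b) * Tf ?G k l)"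
    if ab: "a < 4" "b < 4" for a b
    unfolding se2_transfer[OF cF cY FGIF GF GIT W ab]
  proof (intro sum.cong refl)
    fix k l assume "k \<in> {..<4::nat}" "l \<in> {..<4::nat}"
    then show "F $$ (k,a) * F $$ (l,b) * (- (?Y * mN 4 eta * ?Y\<^sup>T) $$ (k,l) + 1/4 * trN 4 (?Y * mN 4 eta * ?Y\<^sup>T * mN 4 eta) * eta k l)
       = F $$ (k,a) * F $$ (l,b) * Tf ?G k l"
      by (simp only: Tf_mat lessThan_iff)
  qed
  have TG: "Tf ?G k l = Tf (A6 w01 w02 w03 w12 w13 w23) k l" if "k < 4" "l < 4" for k l
    using T_rot[OF that, of c w01 s w23 w02 w13 w03 w12] cs(1)
    unfolding g01_def g02_def g03_def g12_def g13_def g23_def by simp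
  have li: "lin_indep_forms 4 2 \<theta>"
  proof (rule ccontr)
    assume nli: "\<not> lin_indep_forms 4 2 \<theta>"
    have z: "wedge 2 \<theta> [a, b] = 0" if "a < 4" "b < 4" for a b
    proof (rule ccontr)
      assume "wedge 2 \<theta> [a, b] \<noteq> 0"
      moreover have "[a, b] \<in> idx 4 2" using that unfolding idx_def by auto
      ultimately show False using li_from_wedge nli by blast
    qed
    have "?Y = E\<^sup>T * (F\<^sup>T * ?Y * F) * E"
    proof -
      have "E\<^sup>T * (F\<^sup>T * ?Y * F) * E = (F * E)\<^sup>T * ?Y * (F * E)" using cE cF
        by (simp add: transpose_mult[of _ 4 4 _ 4] assoc mult_carrierN)
      then show ?thesis using FE by simp
    qed
    then have "?Y $$ (k,l) = (E\<^sup>T * mN 4 (\<lambda>x y. wedge 2 \<theta> [x, y]) * E) $$ (k,l)" unfolding W by simp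
    also have "\<dots> = (\<Sum>i<4. \<Sum>j<4. E $$ (i,k) * mN 4 (\<lambda>x y. wedge 2 \<theta> [x, y]) $$ (i,j) * E $$ (j,l))"
      by (rule sandwich[OF cE mN_carrier kl(1,2)])
    also have "\<dots> = 0" by (intro sum.neutral ballI) (simp add: z)
    finally show False using kl by simp
  qed
  show ?thesis
  proof (intro exI[of _ 2] exI[of _ \<theta>] conjI allI impI)
    fix a b :: nat assume ab: "a < 4" "b < 4"
    show "superenergy 4 g gi 2 \<Omega> a b = superenergy 4 g gi 2 (wedge 2 \<theta>) a b"
      unfolding seO[OF ab] seW[OF ab] by (intro sum.cong refl) (simp add: TG)
  qed (use li in simp_all)
qed


theorem mainTheorem19:
  fixes N p :: nat and g gi :: "nat \<Rightarrow> nat \<Rightarrow> real" and \<Omega> :: "nat list \<Rightarrow> real"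
  assumes "N \<le> 4"
    and "lorentzian N g" and "inverse_metric N g gi"
    and "1 \<le> p" and "p \<le> N"
    and "is_form N p \<Omega>"
    and "\<exists>xs \<in> idx N p. \<Omega> xs \<noteq> 0"
  shows "\<exists>q \<theta>. 1 \<le> q \<and> q \<le> N \<and> lin_indep_forms N q \<theta> \<and>
           (\<forall>a<N. \<forall>b<N. superenergy N g gi p \<Omega> a b = superenergy N g gi q (wedge q \<theta>) a b)"
proof -
  obtain xs0 where xs0: "xs0 \<in> idx N p" "\<Omega> xs0 \<noteq> 0" using assms(7) by blast
  have "p = 1 \<or> (p = 2 \<and> N \<le> 3) \<or> (p = 2 \<and> N = 4) \<or> (p = 3 \<and> N = 3) \<or> (p = 3 \<and> N = 4) \<or> (p = 4 \<and> N = 4)"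
    using assms(1,4,5) by arith
  then show ?thesis
  proof (elim disjE conjE)
    assume p: "p = 1"
    show ?thesis using case_p1[of N xs0 \<Omega> g gi] xs0 assms(4,5) unfolding p by simp
  next
    assume p: "p = 2" and N: "N \<le> 3"
    show ?thesis using case_p2_small[of N \<Omega> xs0 g gi] xs0 assms(5,6) N unfolding p by simp
  next
    assume p: "p = 2" and N: "N = 4"
    show ?thesis using case_42[of g gi \<Omega>] assms(2,3,6,7) unfolding p N by simp
  next
    assume p: "p = 3" and N: "N = 3"
    show ?thesis using case_33[of \<Omega> g gi] assms(6,7) unfolding p N by simp
  next
    assume p: "p = 3" and N: "N = 4"
    show ?thesis using case_43[of \<Omega> g gi] assms(6,7) unfolding p N by simp
  next
    assume p: "p = 4" and N: "N = 4"
    show ?thesis using case_44[of \<Omega> g gi] assms(6,7) unfolding p N by simp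
  qed
qed

end
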